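(* Let $\Omega\subset\mathbb{R}^n$, $n\ge 2$, be a bounded open set with $C^\infty$ boundary, let $\omega\in\mathbb{S}^{n-1}$ be fixed and let $m\in\{2,3,\dots\}$ be fixed. Let $f\in L^\infty(\Omega)$ be such that \[ \int_\Omega f\,(\omega\cdot\nabla v_1)^{m-1}\,\nabla v_1\cdot\nabla v_2\,dx=0 \] for all functions $v_1,v_2\in C^\infty(\overline{\Omega})$ harmonic in $\Omega$. Then $f=0$ in $\Omega$. *)

theory Defs
  imports "HOL-Analysis.Analysis"
begin

fun diffn :: "nat \<Rightarrow> 'a::euclidean_space set \<Rightarrow> ('a \<Rightarrow> real) \<Rightarrow> bool" where
  "diffn 0 S f = continuous_on S f"
| "diffn (Suc k) S f =
     ((\<forall>x\<in>S. f differentiable (at x)) \<and>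
      (\<forall>v. diffn k S (\<lambda>x. frechet_derivative f (at x) v)))"

definition smooth_on :: "'a::euclidean_space set \<Rightarrow> ('a \<Rightarrow> real) \<Rightarrow> bool" where
  "smooth_on S f \<longleftrightarrow> (\<forall>k. diffn k S f)"

definition grad_dot :: "('a::euclidean_space \<Rightarrow> real) \<Rightarrow> ('a \<Rightarrow> real) \<Rightarrow> 'a \<Rightarrow> real" where
  "grad_dot u v x = (\<Sum>b\<in>Basis. frechet_derivative u (at x) b * frechet_derivative v (at x) b)"

definition laplacian :: "('a::euclidean_space \<Rightarrow> real) \<Rightarrow> 'a \<Rightarrow> real" where
  "laplacian u x = (\<Sum>b\<in>Basis. frechet_derivative (\<lambda>y. frechet_derivative u (at y) b) (at x) b)"

definition harmonic_on :: "'a::euclidean_space set \<Rightarrow> ('a \<Rightarrow> real) \<Rightarrow> bool" where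
  "harmonic_on S u \<longleftrightarrow> (\<forall>x\<in>S. laplacian u x = 0)"

definition smooth_boundary :: "'a::euclidean_space set \<Rightarrow> bool" where
  "smooth_boundary \<Omega> \<longleftrightarrow>
     (\<forall>x0\<in>frontier \<Omega>. \<exists>r>0. \<exists>\<psi>. smooth_on UNIV \<psi> \<and>
        (\<forall>x\<in>ball x0 r. \<exists>v. frechet_derivative \<psi> (at x) v \<noteq> 0) \<and>
        \<Omega> \<inter> ball x0 r = {x\<in>ball x0 r. \<psi> x < 0})"

definition Linf_on :: "'a::euclidean_space set \<Rightarrow> ('a \<Rightarrow> real) \<Rightarrow> bool" where
  "Linf_on \<Omega> f \<longleftrightarrow> f \<in> borel_measurable (lebesgue_on \<Omega>) \<and>
     (\<exists>C. AE x in lebesgue_on \<Omega>. \<bar>f x\<bar> \<le> C)"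

end

theory Submission
  imports Defs
begin

lemma diffn_cont: "diffn k UNIV f \<Longrightarrow> continuous_on UNIV f"
  by (cases k) (auto intro!: continuous_at_imp_continuous_on differentiable_imp_continuous_within)

lemma fd_eq: "(f has_derivative f') (at x) \<Longrightarrow> frechet_derivative f (at x) v = f' v"
proof -
  assume "(f has_derivative f') (at x)"
  then have "f' = frechet_derivative f (at x)" by (rule frechet_derivative_at)
  thus ?thesis by simp
qed

lemma fd_add:
  fixes f g :: "'a::euclidean_space \<Rightarrow> real"
  assumes "f differentiable at x" "g differentiable at x"
  shows "frechet_derivative (\<lambda>x. f x + g x) (at x) v = frechet_derivative f (at x) v + frechet_derivative g (at x) v"
proof -
  have "((\<lambda>x. f x + g x) has_derivative (\<lambda>v. frechet_derivative f (at x) v + frechet_derivative g (at x) v)) (at x)"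
    using assms by (intro has_derivative_add) (auto simp: frechet_derivative_works[symmetric])
  from fd_eq[OF this] show ?thesis by simp
qed

lemma fd_cmult:
  fixes f :: "'a::euclidean_space \<Rightarrow> real"
  assumes "f differentiable at x"
  shows "frechet_derivative (\<lambda>x. c * f x) (at x) v = c * frechet_derivative f (at x) v"
proof -
  have "((\<lambda>x. c * f x) has_derivative (\<lambda>v. c * frechet_derivative f (at x) v)) (at x)"
  proof -
    have d: "(f has_derivative frechet_derivative f (at x)) (at x)" using assms frechet_derivative_works by blast
    show ?thesis using d by (auto intro!: derivative_eq_intros)
  qed
  from fd_eq[OF this] show ?thesis by simp
qed

lemma fd_const: "frechet_derivative (\<lambda>x. c) (at x) v = 0"
  by (rule fd_eq) (rule has_derivative_const)

lemma fd_inner: "frechet_derivative (\<lambda>x. inner a x) (at x) v = inner a v"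
proof -
  have "((\<lambda>x. inner a x) has_derivative (\<lambda>v. inner a v)) (at x)"
    by (auto intro!: derivative_eq_intros)
  from fd_eq[OF this] show ?thesis by simp
qed

lemma diffn_add: "diffn k UNIV f \<Longrightarrow> diffn k UNIV g \<Longrightarrow> diffn k UNIV (\<lambda>x. f x + g x)"
proof (induction k arbitrary: f g)
  case 0 thus ?case by (simp add: continuous_on_add)
next
  case (Suc k)
  have fd: "\<And>x. f differentiable at x" and gd: "\<And>x. g differentiable at x" using Suc.prems by auto
  have eq: "(\<lambda>x. frechet_derivative (\<lambda>x. f x + g x) (at x) v) = (\<lambda>x. frechet_derivative f (at x) v + frechet_derivative g (at x) v)" for v
    using fd_add[OF fd gd] by auto
  show ?case using Suc fd gd by (auto simp: eq)
qed

lemma diffn_cmult: "diffn k UNIV f \<Longrightarrow> diffn k UNIV (\<lambda>x. c * f x)"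
proof (induction k arbitrary: f)
  case 0 thus ?case by (auto intro!: continuous_on_mult continuous_on_const)
next
  case (Suc k)
  have fd: "\<And>x. f differentiable at x" using Suc.prems by auto
  have eq: "(\<lambda>x. frechet_derivative (\<lambda>x. c * f x) (at x) v) = (\<lambda>x. c * frechet_derivative f (at x) v)" for v
    using fd_cmult[OF fd] by auto
  show ?case using Suc fd by (auto simp: eq)
qed

lemma diffn_const: "diffn k UNIV (\<lambda>x. c)"
proof (induction k arbitrary: c)
  case 0 thus ?case by auto
next
  case (Suc k) thus ?case by (auto simp: fd_const)
qed

lemma diffn_inner: "diffn k UNIV (\<lambda>x. inner a x)"
proof (cases k)
  case 0 thus ?thesis by (auto intro!: continuous_on_inner continuous_on_const continuous_on_id)
next
  case (Suc k) thus ?thesis by (auto simp: fd_inner diffn_const)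
qed

definition EF :: "'a::euclidean_space \<Rightarrow> 'a \<Rightarrow> real \<Rightarrow> real \<Rightarrow> 'a \<Rightarrow> real" where
  "EF p b \<alpha> \<beta> x = exp (inner p x) * (\<alpha> * cos (inner b x) + \<beta> * sin (inner b x))"

lemma EF_has_derivative:
  "(EF p b \<alpha> \<beta> has_derivative (\<lambda>v. EF p b (\<alpha> * inner p v + \<beta> * inner b v) (\<beta> * inner p v - \<alpha> * inner b v) x)) (at x)"
  unfolding EF_def
  apply (rule derivative_eq_intros refl)+
  apply (simp add: fun_eq_iff algebra_simps)
  done

lemma fd_EF: "frechet_derivative (EF p b \<alpha> \<beta>) (at x) v = EF p b (\<alpha> * inner p v + \<beta> * inner b v) (\<beta> * inner p v - \<alpha> * inner b v) x"
  by (rule fd_eq[OF EF_has_derivative])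

lemma EF_differentiable: "EF p b \<alpha> \<beta> differentiable at x"
  using EF_has_derivative differentiable_def by blast

lemma diffn_EF: "diffn k UNIV (EF p b \<alpha> \<beta>)"
proof (induction k arbitrary: \<alpha> \<beta>)
  case 0 thus ?case by (auto intro!: continuous_at_imp_continuous_on differentiable_imp_continuous_within EF_differentiable)
next
  case (Suc k) thus ?case by (auto simp: fd_EF EF_differentiable)
qed

lemma int_fphi:
  fixes f :: "'a::euclidean_space \<Rightarrow> real"
  assumes "open \<Omega>" "bounded \<Omega>" "Linf_on \<Omega> f" "continuous_on UNIV \<phi>"
  shows "integrable (lebesgue_on \<Omega>) (\<lambda>x. f x * \<phi> x)"
proof -
  have Ol: "\<Omega> \<in> lmeasurable" using assms by (intro lmeasurable_open) auto
  interpret finite_measure "lebesgue_on \<Omega>" by (rule finite_measure_lebesgue_on[OF Ol])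
  obtain C where C: "AE x in lebesgue_on \<Omega>. \<bar>f x\<bar> \<le> C" and fm: "f \<in> borel_measurable (lebesgue_on \<Omega>)"
    using assms(3) unfolding Linf_on_def by auto
  have "compact (closure \<Omega>)" using assms(2) compact_closure by auto
  then have "compact (\<phi> ` closure \<Omega>)"
    using compact_continuous_image continuous_on_subset assms(4) by blast
  then have "bounded (\<phi> ` closure \<Omega>)" by (rule compact_imp_bounded)
  then obtain M where M: "\<forall>x\<in>closure \<Omega>. \<bar>\<phi> x\<bar> \<le> M" by (auto simp: bounded_iff)
  have \<phi>m: "\<phi> \<in> borel_measurable (lebesgue_on \<Omega>)"
    using continuous_imp_measurable_on_sets_lebesgue[OF continuous_on_subset[OF assms(4)]] Ol
    by blast
  show ?thesis
  proof (rule integrable_const_bound[where B="C*M"])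
    show "AE x in lebesgue_on \<Omega>. norm (f x * \<phi> x) \<le> C * M"
      using C AE_space[of "lebesgue_on \<Omega>"]
    proof eventually_elim
      case (elim x)
      then have "x \<in> closure \<Omega>" using closure_subset by auto
      then have "\<bar>\<phi> x\<bar> \<le> M" using M by auto
      then show ?case using elim by (simp add: abs_mult mult_mono')
    qed
    show "(\<lambda>x. f x * \<phi> x) \<in> borel_measurable (lebesgue_on \<Omega>)" using fm \<phi>m by measurable
  qed
qed

lemma coeff1:
  fixes A C f :: "'a \<Rightarrow> real"
  assumes iA: "\<And>j. integrable M (\<lambda>x. f x * A x ^ j * A x)"
    and iC: "\<And>j. integrable M (\<lambda>x. f x * A x ^ j * C x)"
    and H: "\<And>t. integral\<^sup>L M (\<lambda>x. f x * (1 + t * A x) ^ n * (A x + t * C x)) = 0"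
  shows "integral\<^sup>L M (\<lambda>x. f x * (of_nat n * A x ^ 2 + C x)) = 0"
proof -
  define P where "P j = integral\<^sup>L M (\<lambda>x. f x * A x ^ j * A x)" for j
  define Q where "Q j = integral\<^sup>L M (\<lambda>x. f x * A x ^ j * C x)" for j
  have pw: "f x * (1 + t * A x) ^ n * (A x + t * C x) =
     (\<Sum>j\<le>n. t ^ j * of_nat (n choose j) * (f x * A x ^ j * A x)) +
     (\<Sum>j\<le>n. t ^ Suc j * of_nat (n choose j) * (f x * A x ^ j * C x))" for t x
  proof -
    have "(1 + t * A x) ^ n = (\<Sum>j\<le>n. of_nat (n choose j) * (t * A x) ^ j * 1 ^ (n - j))"
      using binomial_ring[of "t * A x" 1 n] by (simp add: add.commute)
    then show ?thesis
      by (simp add: algebra_simps sum_distrib_left sum_distrib_right power_mult_distrib sum.distrib)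
  qed
  have I: "(\<Sum>j\<le>n. t ^ j * of_nat (n choose j) * P j) + (\<Sum>j\<le>n. t ^ Suc j * of_nat (n choose j) * Q j) = 0" for t
  proof -
    have "0 = integral\<^sup>L M (\<lambda>x. f x * (1 + t * A x) ^ n * (A x + t * C x))" using H by simp
    also have "\<dots> = integral\<^sup>L M (\<lambda>x. (\<Sum>j\<le>n. t ^ j * of_nat (n choose j) * (f x * A x ^ j * A x)) +
     (\<Sum>j\<le>n. t ^ Suc j * of_nat (n choose j) * (f x * A x ^ j * C x)))" by (simp only: pw)
    also have "\<dots> = (\<Sum>j\<le>n. t ^ j * of_nat (n choose j) * P j) + (\<Sum>j\<le>n. t ^ Suc j * of_nat (n choose j) * Q j)"
      using iA iC by (simp add: P_def Q_def integral_sum integrable_sum)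
    finally show ?thesis by simp
  qed
  define c where "c i = of_nat (n choose i) * P i + (if i = 0 then 0 else of_nat (n choose (i - 1)) * Q (i - 1))" for i
  have "(\<Sum>i\<le>Suc n. c i * t ^ i) = 0" for t
  proof -
    have "(\<Sum>i\<le>Suc n. c i * t ^ i) = (\<Sum>i\<le>Suc n. t ^ i * of_nat (n choose i) * P i) +
        (\<Sum>i\<le>Suc n. (if i = 0 then 0 else t ^ i * of_nat (n choose (i - 1)) * Q (i - 1)))"
      unfolding sum.distrib[symmetric] by (rule sum.cong) (auto simp: c_def algebra_simps)
    also have "(\<Sum>i\<le>Suc n. t ^ i * of_nat (n choose i) * P i) = (\<Sum>i\<le>n. t ^ i * of_nat (n choose i) * P i)"
      by simp
    also have "(\<Sum>i\<le>Suc n. (if i = 0 then 0 else t ^ i * of_nat (n choose (i - 1)) * Q (i - 1))) =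
         (\<Sum>j\<le>n. t ^ Suc j * of_nat (n choose j) * Q j)"
      by (subst sum.atMost_Suc_shift) simp
    finally show ?thesis using I by simp
  qed
  then have "c 1 = 0" using polyfun_eq_0[of c "Suc n"] by auto
  then have c1: "of_nat n * P 1 + Q 0 = 0" by (simp add: c_def)
  have "integral\<^sup>L M (\<lambda>x. f x * (of_nat n * A x ^ 2 + C x)) =
        integral\<^sup>L M (\<lambda>x. of_nat n * (f x * A x ^ 1 * A x) + f x * A x ^ 0 * C x)"
    by (simp add: algebra_simps power2_eq_square)
  also have "\<dots> = of_nat n * P 1 + Q 0"
    using iA[of 1] iC[of 0] by (simp add: P_def Q_def del: power_0 power_one_right)
  finally show ?thesis using c1 by simp
qed

lemma fd_lin:
  fixes h :: "'a::euclidean_space \<Rightarrow> real"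
  assumes "h differentiable at y"
  shows "frechet_derivative (\<lambda>x. inner a x + t * h x) (at y) e = inner a e + t * frechet_derivative h (at y) e"
proof -
  have d: "(h has_derivative frechet_derivative h (at y)) (at y)" using assms frechet_derivative_works by blast
  have "((\<lambda>x. inner a x + t * h x) has_derivative (\<lambda>e. inner a e + t * frechet_derivative h (at y) e)) (at y)"
    by (intro has_derivative_add has_derivative_mult_right d has_derivative_inner_right has_derivative_ident)
  from fd_eq[OF this] show ?thesis .
qed

lemma fd_aff:
  fixes h :: "'a::euclidean_space \<Rightarrow> real"
  assumes "h differentiable at y"
  shows "frechet_derivative (\<lambda>x. c + t * h x) (at y) e = t * frechet_derivative h (at y) e"
proof -
  have d: "(h has_derivative frechet_derivative h (at y)) (at y)" using assms frechet_derivative_works by blast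
  have "((\<lambda>x. c + t * h x) has_derivative (\<lambda>e. 0 + t * frechet_derivative h (at y) e)) (at y)"
    by (intro has_derivative_add has_derivative_mult_right d has_derivative_const)
  from fd_eq[OF this] show ?thesis by simp
qed

lemma fd_componentwise:
  fixes h :: "'a::euclidean_space \<Rightarrow> real"
  assumes "h differentiable at y"
  shows "frechet_derivative h (at y) w = (\<Sum>e\<in>Basis. inner w e * frechet_derivative h (at y) e)"
proof -
  have "linear (frechet_derivative h (at y))"
    using assms frechet_derivative_works has_derivative_linear by blast
  from Linear_Algebra.linear_componentwise[OF this, of w 1] show ?thesis by simp
qed

lemma smooth_diff: "smooth_on UNIV h \<Longrightarrow> h differentiable at x"
  unfolding smooth_on_def using diffn.simps(2) by blast

lemma smooth_deriv: "smooth_on UNIV h \<Longrightarrow> smooth_on UNIV (\<lambda>y. frechet_derivative h (at y) e)"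
  unfolding smooth_on_def by (metis diffn.simps(2))

lemma smooth_cont: "smooth_on UNIV h \<Longrightarrow> continuous_on UNIV h"
  unfolding smooth_on_def by (metis diffn.simps(1))

lemma key:
  fixes f h :: "'a::euclidean_space \<Rightarrow> real"
  assumes om: "open \<Omega>" "bounded \<Omega>" "Linf_on \<Omega> f" and nw: "norm \<omega> = 1"
    and H: "\<forall>v1 v2. smooth_on UNIV v1 \<and> smooth_on UNIV v2 \<and> harmonic_on \<Omega> v1 \<and> harmonic_on \<Omega> v2 \<longrightarrow>
           integral\<^sup>L (lebesgue_on \<Omega>)
             (\<lambda>x. f x * (frechet_derivative v1 (at x) \<omega>) ^ (m - 1) * grad_dot v1 v2 x) = 0"
    and sh: "smooth_on UNIV h" and hh: "harmonic_on \<Omega> h"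
  shows "integral\<^sup>L (lebesgue_on \<Omega>) (\<lambda>x. f x * (of_nat (m - 1) * (frechet_derivative h (at x) \<omega>)\<^sup>2 + grad_dot h h x)) = 0"
proof -
  define D where "D e y = frechet_derivative h (at y) e" for e y
  define A where "A = D \<omega>"
  define C where "C = grad_dot h h"
  have hd: "h differentiable at y" for y using smooth_diff[OF sh] .
  have sD: "smooth_on UNIV (D e)" for e unfolding D_def using smooth_deriv[OF sh] .
  have Dd: "D e differentiable at y" for e y using smooth_diff[OF sD] .
  have Dc: "continuous_on UNIV (D e)" for e using smooth_cont[OF sD] .
  have Ac: "continuous_on UNIV A" unfolding A_def by (rule Dc)
  have Cc: "continuous_on UNIV C" unfolding C_def grad_dot_def
    using Dc unfolding D_def by (intro continuous_on_sum continuous_on_mult) auto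
  define v1 where "v1 t x = inner \<omega> x + t * h x" for t x
  have sv1: "smooth_on UNIV (v1 t)" for t
    using sh unfolding v1_def smooth_on_def by (auto intro!: diffn_add diffn_inner diffn_cmult)
  have dv1: "frechet_derivative (v1 t) (at y) e = inner \<omega> e + t * D e y" for t y e
    unfolding v1_def D_def by (rule fd_lin[OF hd])
  have hv1: "harmonic_on \<Omega> (v1 t)" for t
  proof -
    have "laplacian (v1 t) x = t * laplacian h x" for x
    proof -
      have "laplacian (v1 t) x = (\<Sum>e\<in>Basis. frechet_derivative (\<lambda>y. inner \<omega> e + t * D e y) (at x) e)"
        unfolding laplacian_def dv1 ..
      also have "\<dots> = (\<Sum>e\<in>Basis. t * frechet_derivative (D e) (at x) e)"
        by (simp add: fd_aff[OF Dd])
      also have "\<dots> = t * laplacian h x"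
        unfolding laplacian_def D_def by (simp add: sum_distrib_left)
      finally show ?thesis .
    qed
    then show ?thesis using hh unfolding harmonic_on_def by simp
  qed
  have pw: "f x * (frechet_derivative (v1 t) (at x) \<omega>) ^ (m - 1) * grad_dot (v1 t) h x
      = f x * (1 + t * A x) ^ (m - 1) * (A x + t * C x)" for t x
  proof -
    have 1: "frechet_derivative (v1 t) (at x) \<omega> = 1 + t * A x"
      unfolding dv1 A_def using nw by (simp add: norm_eq_1)
    have "grad_dot (v1 t) h x = (\<Sum>e\<in>Basis. inner \<omega> e * D e x) + t * C x"
      unfolding grad_dot_def dv1 C_def D_def by (simp add: algebra_simps sum.distrib sum_distrib_left)
    also have "(\<Sum>e\<in>Basis. inner \<omega> e * D e x) = A x"
      unfolding A_def D_def by (rule fd_componentwise[OF hd, symmetric])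
    finally show ?thesis using 1 by simp
  qed
  have Ht: "integral\<^sup>L (lebesgue_on \<Omega>) (\<lambda>x. f x * (1 + t * A x) ^ (m - 1) * (A x + t * C x)) = 0" for t
  proof -
    have "integral\<^sup>L (lebesgue_on \<Omega>) (\<lambda>x. f x * (frechet_derivative (v1 t) (at x) \<omega>) ^ (m - 1) * grad_dot (v1 t) h x) = 0"
      using H sv1 sh hv1 hh by blast
    then show ?thesis by (simp only: pw)
  qed
  have iA: "integrable (lebesgue_on \<Omega>) (\<lambda>x. f x * A x ^ j * A x)" for j
    using int_fphi[OF om, of "\<lambda>x. A x ^ j * A x"] Ac
    by (simp add: mult.assoc continuous_on_mult continuous_on_power)
  have iC: "integrable (lebesgue_on \<Omega>) (\<lambda>x. f x * A x ^ j * C x)" for j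
    using int_fphi[OF om, of "\<lambda>x. A x ^ j * C x"] Ac Cc
    by (simp add: mult.assoc continuous_on_mult continuous_on_power)
  from coeff1[OF iA iC Ht] show ?thesis unfolding A_def D_def C_def .
qed

lemma sq_id: "(E * (a * c - d * s))\<^sup>2 + (E * (d * c + a * s))\<^sup>2 = E\<^sup>2 * (a\<^sup>2 + d\<^sup>2) * (c\<^sup>2 + s\<^sup>2)"
  for E a c d s :: real
  by (simp add: power2_eq_square algebra_simps)

lemma EF_lap:
  assumes pb: "inner p b = 0" and bb: "inner b b = inner p p"
  shows "laplacian (EF p b \<alpha> \<beta>) x = 0"
proof -
  have ext1: "(\<lambda>y. frechet_derivative (EF p b \<alpha> \<beta>) (at y) e) = EF p b (\<alpha> * inner p e + \<beta> * inner b e) (\<beta> * inner p e - \<alpha> * inner b e)" for e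
    by (rule ext) (rule fd_EF)
  define E where "E = exp (inner p x)"
  define K1 where "K1 = E * (\<alpha> * cos (inner b x) + \<beta> * sin (inner b x))"
  define K2 where "K2 = 2 * E * (\<beta> * cos (inner b x) - \<alpha> * sin (inner b x))"
  have pt: "frechet_derivative (\<lambda>y. frechet_derivative (EF p b \<alpha> \<beta>) (at y) e) (at x) e =
      K1 * (inner p e * inner p e - inner b e * inner b e) + K2 * (inner p e * inner b e)" for e
    unfolding ext1 fd_EF by (simp add: EF_def K1_def K2_def E_def algebra_simps)
  have "laplacian (EF p b \<alpha> \<beta>) x = (\<Sum>e\<in>Basis. K1 * (inner p e * inner p e - inner b e * inner b e) + K2 * (inner p e * inner b e))"
    unfolding laplacian_def pt ..
  also have "\<dots> = K1 * ((\<Sum>e\<in>Basis. inner p e * inner p e) - (\<Sum>e\<in>Basis. inner b e * inner b e)) + K2 * (\<Sum>e\<in>Basis. inner p e * inner b e)"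
    by (simp add: sum.distrib sum_subtractf sum_distrib_left right_diff_distrib)
  also have "\<dots> = K1 * (inner p p - inner b b) + K2 * inner p b"
    by (simp only: euclidean_inner[symmetric])
  finally show ?thesis using pb bb by simp
qed

lemma EF_smooth: "smooth_on UNIV (EF p b \<alpha> \<beta>)"
  unfolding smooth_on_def using diffn_EF by blast

lemma EF_sum:
  assumes bb: "inner b b = inner p p"
  shows "real k * (frechet_derivative (EF p b 1 0) (at x) \<omega>)\<^sup>2 + grad_dot (EF p b 1 0) (EF p b 1 0) x
       + (real k * (frechet_derivative (EF p b 0 1) (at x) \<omega>)\<^sup>2 + grad_dot (EF p b 0 1) (EF p b 0 1) x)
       = exp (inner (2 *\<^sub>R p) x) * (real k * ((inner p \<omega>)\<^sup>2 + (inner b \<omega>)\<^sup>2) + 2 * inner p p)"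
proof -
  define E where "E = exp (inner p x)"
  define c where "c = cos (inner b x)"
  define s where "s = sin (inner b x)"
  have cs: "c\<^sup>2 + s\<^sup>2 = 1" unfolding c_def s_def by simp
  have du: "frechet_derivative (EF p b 1 0) (at x) e = E * (inner p e * c - inner b e * s)" for e
    unfolding fd_EF by (simp add: EF_def E_def c_def s_def algebra_simps)
  have dw: "frechet_derivative (EF p b 0 1) (at x) e = E * (inner b e * c + inner p e * s)" for e
    unfolding fd_EF by (simp add: EF_def E_def c_def s_def algebra_simps)
  have A: "(frechet_derivative (EF p b 1 0) (at x) \<omega>)\<^sup>2 + (frechet_derivative (EF p b 0 1) (at x) \<omega>)\<^sup>2
      = E\<^sup>2 * ((inner p \<omega>)\<^sup>2 + (inner b \<omega>)\<^sup>2)"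
    unfolding du dw sq_id cs by simp
  have "grad_dot (EF p b 1 0) (EF p b 1 0) x + grad_dot (EF p b 0 1) (EF p b 0 1) x
     = (\<Sum>e\<in>Basis. (frechet_derivative (EF p b 1 0) (at x) e)\<^sup>2 + (frechet_derivative (EF p b 0 1) (at x) e)\<^sup>2)"
    unfolding grad_dot_def by (simp add: sum.distrib power2_eq_square)
  also have "\<dots> = (\<Sum>e\<in>Basis. E\<^sup>2 * (inner p e * inner p e + inner b e * inner b e))"
    unfolding du dw sq_id cs by (simp add: power2_eq_square)
  also have "\<dots> = E\<^sup>2 * ((\<Sum>e\<in>Basis. inner p e * inner p e) + (\<Sum>e\<in>Basis. inner b e * inner b e))"
    by (simp add: sum.distrib sum_distrib_left distrib_left)
  also have "\<dots> = E\<^sup>2 * (inner p p + inner b b)"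
    by (simp only: euclidean_inner[symmetric])
  finally have C: "grad_dot (EF p b 1 0) (EF p b 1 0) x + grad_dot (EF p b 0 1) (EF p b 0 1) x = E\<^sup>2 * (inner p p + inner b b)" .
  have E2: "E\<^sup>2 = exp (inner (2 *\<^sub>R p) x)"
    unfolding E_def by (simp add: power2_eq_square exp_add[symmetric])
  have "real k * (frechet_derivative (EF p b 1 0) (at x) \<omega>)\<^sup>2 + grad_dot (EF p b 1 0) (EF p b 1 0) x
       + (real k * (frechet_derivative (EF p b 0 1) (at x) \<omega>)\<^sup>2 + grad_dot (EF p b 0 1) (EF p b 0 1) x)
       = real k * ((frechet_derivative (EF p b 1 0) (at x) \<omega>)\<^sup>2 + (frechet_derivative (EF p b 0 1) (at x) \<omega>)\<^sup>2)
         + (grad_dot (EF p b 1 0) (EF p b 1 0) x + grad_dot (EF p b 0 1) (EF p b 0 1) x)"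
    by (simp add: algebra_simps)
  also have "\<dots> = E\<^sup>2 * (real k * ((inner p \<omega>)\<^sup>2 + (inner b \<omega>)\<^sup>2) + 2 * inner p p)"
    unfolding A C bb by (simp add: algebra_simps)
  finally show ?thesis unfolding E2 .
qed

lemma exists_perp:
  fixes p :: "'a::euclidean_space"
  assumes "DIM('a) \<ge> 2"
  shows "\<exists>b. inner p b = 0 \<and> inner b b = inner p p"
proof -
  obtain e1 :: 'a where e1: "e1 \<in> Basis" using nonempty_Basis by blast
  have "card (Basis - {e1}) \<ge> 1" using assms e1 by (simp add: card_Diff_singleton)
  then obtain e2 where e2: "e2 \<in> Basis" "e2 \<noteq> e1"
    by (metis Diff_iff card_0_eq ex_in_conv finite_Basis finite_Diff insertI1 not_one_le_zero)
  have o12: "inner e1 e2 = 0" "inner e2 e1 = 0" using e1 e2 by (auto simp: inner_not_same_Basis)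
  have n1: "inner e1 e1 = 1" "inner e2 e2 = 1" using e1 e2 by auto
  obtain c where c: "inner p c = 0" "c \<noteq> 0"
  proof (cases "inner p e1 = 0 \<and> inner p e2 = 0")
    case True then show ?thesis using that[of e1] e1 nonzero_Basis by blast
  next
    case False
    let ?c = "inner p e2 *\<^sub>R e1 - inner p e1 *\<^sub>R e2"
    have "inner p ?c = 0" by (simp add: inner_diff_right)
    moreover have "inner ?c e1 = inner p e2" "inner ?c e2 = - inner p e1"
      using o12 n1 by (simp_all add: inner_diff_left)
    then have "?c \<noteq> 0" using False by auto
    ultimately show ?thesis using that by blast
  qed
  define b where "b = (norm p / norm c) *\<^sub>R c"
  have "inner p b = 0" unfolding b_def using c by simp
  moreover have "inner b b = inner p p"
    unfolding b_def using c by (simp add: power2_norm_eq_inner[symmetric] power_divide)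
  ultimately show ?thesis by blast
qed

lemma EF_cont: "continuous_on UNIV (EF p b \<alpha> \<beta>)"
  using smooth_cont[OF EF_smooth] .

lemma X_cont: "continuous_on UNIV (\<lambda>x. real k * (frechet_derivative (EF p b \<alpha> \<beta>) (at x) \<omega>)\<^sup>2 + grad_dot (EF p b \<alpha> \<beta>) (EF p b \<alpha> \<beta>) x)"
  unfolding grad_dot_def fd_EF
  by (intro continuous_on_add continuous_on_mult continuous_on_power continuous_on_sum continuous_on_const EF_cont)

lemma inner_smooth: "smooth_on UNIV (inner a)"
  unfolding smooth_on_def using diffn_inner[of _ a] by simp

lemma inner_harm: "harmonic_on S (inner a)"
proof -
  have "(\<lambda>y. frechet_derivative (inner a) (at y) e) = (\<lambda>y. inner a e)" for e
    using fd_inner[of a] by simp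
  then show ?thesis unfolding harmonic_on_def laplacian_def by (simp add: fd_const)
qed

lemma exp_orth:
  fixes \<Omega> :: "'a::euclidean_space set" and \<omega> :: 'a and m :: nat and f :: "'a \<Rightarrow> real"
  assumes dim: "DIM('a) \<ge> 2"
    and om: "open \<Omega>" "bounded \<Omega>" "Linf_on \<Omega> f"
    and nw: "norm \<omega> = 1"
    and m2: "m \<ge> 2"
    and H: "\<forall>v1 v2. smooth_on UNIV v1 \<and> smooth_on UNIV v2 \<and> harmonic_on \<Omega> v1 \<and> harmonic_on \<Omega> v2 \<longrightarrow>
           integral\<^sup>L (lebesgue_on \<Omega>)
             (\<lambda>x. f x * (frechet_derivative v1 (at x) \<omega>) ^ (m - 1) * grad_dot v1 v2 x) = 0"
  shows "integral\<^sup>L (lebesgue_on \<Omega>) (\<lambda>x. f x * exp (inner k x)) = 0"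
proof (cases "k = 0")
  case True
  have K: "integral\<^sup>L (lebesgue_on \<Omega>) (\<lambda>x. f x * (of_nat (m - 1) * (frechet_derivative (inner \<omega>) (at x) \<omega>)\<^sup>2 + grad_dot (inner \<omega>) (inner \<omega>) x)) = 0"
    by (rule key[OF om nw H inner_smooth inner_harm])
  have gi: "grad_dot (inner \<omega>) (inner \<omega>) x = 1" for x
    using fd_inner[of \<omega>] nw unfolding grad_dot_def
    by (simp add: euclidean_inner[symmetric] norm_eq_1)
  have fi: "frechet_derivative (inner \<omega>) (at x) \<omega> = 1" for x
    using fd_inner[of \<omega>] nw by (simp add: norm_eq_1)
  have "integral\<^sup>L (lebesgue_on \<Omega>) (\<lambda>x. real m * f x) = 0"
    using K m2 unfolding gi fi by (simp add: algebra_simps of_nat_diff)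
  then have "integral\<^sup>L (lebesgue_on \<Omega>) f = 0" using m2 by simp
  then show ?thesis using True by simp
next
  case False
  define p where "p = (1/2) *\<^sub>R k"
  have kp: "k = 2 *\<^sub>R p" unfolding p_def by simp
  have p0: "p \<noteq> 0" using False unfolding p_def by simp
  obtain b where pb: "inner p b = 0" and bb: "inner b b = inner p p" using exists_perp[OF dim] by blast
  let ?X = "\<lambda>\<alpha> \<beta> x. real (m - 1) * (frechet_derivative (EF p b \<alpha> \<beta>) (at x) \<omega>)\<^sup>2 + grad_dot (EF p b \<alpha> \<beta>) (EF p b \<alpha> \<beta>) x"
  have hEF: "harmonic_on \<Omega> (EF p b \<alpha> \<beta>)" for \<alpha> \<beta>
    unfolding harmonic_on_def using EF_lap[OF pb bb] by blast
  have K: "integral\<^sup>L (lebesgue_on \<Omega>) (\<lambda>x. f x * ?X \<alpha> \<beta> x) = 0" for \<alpha> \<beta>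
    by (rule key[OF om nw H EF_smooth hEF])
  have I: "integrable (lebesgue_on \<Omega>) (\<lambda>x. f x * ?X \<alpha> \<beta> x)" for \<alpha> \<beta>
    by (rule int_fphi[OF om X_cont])
  define \<kappa> where "\<kappa> = real (m - 1) * ((inner p \<omega>)\<^sup>2 + (inner b \<omega>)\<^sup>2) + 2 * inner p p"
  have \<kappa>: "\<kappa> > 0" unfolding \<kappa>_def using p0 by (intro add_nonneg_pos) auto
  have "0 = integral\<^sup>L (lebesgue_on \<Omega>) (\<lambda>x. f x * ?X 1 0 x) + integral\<^sup>L (lebesgue_on \<Omega>) (\<lambda>x. f x * ?X 0 1 x)"
    using K by simp
  also have "\<dots> = integral\<^sup>L (lebesgue_on \<Omega>) (\<lambda>x. f x * ?X 1 0 x + f x * ?X 0 1 x)"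
    using I by simp
  also have "\<dots> = integral\<^sup>L (lebesgue_on \<Omega>) (\<lambda>x. \<kappa> * (f x * exp (inner k x)))"
  proof (rule Bochner_Integration.integral_cong[OF refl])
    fix x
    have "f x * ?X 1 0 x + f x * ?X 0 1 x = f x * (?X 1 0 x + ?X 0 1 x)" by (simp add: algebra_simps)
    also have "?X 1 0 x + ?X 0 1 x = exp (inner k x) * \<kappa>"
      unfolding kp \<kappa>_def by (rule EF_sum[OF bb])
    finally show "f x * ?X 1 0 x + f x * ?X 0 1 x = \<kappa> * (f x * exp (inner k x))" by simp
  qed
  also have "\<dots> = \<kappa> * integral\<^sup>L (lebesgue_on \<Omega>) (\<lambda>x. f x * exp (inner k x))"
    by simp
  finally show ?thesis using \<kappa> by simp
qed

inductive_set expalg :: "('a::euclidean_space \<Rightarrow> real) set" where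
  ex: "(\<lambda>x. c * exp (inner k x)) \<in> expalg"
| add: "\<phi> \<in> expalg \<Longrightarrow> \<psi> \<in> expalg \<Longrightarrow> (\<lambda>x. \<phi> x + \<psi> x) \<in> expalg"

lemma expalg_mult_ex: "\<psi> \<in> expalg \<Longrightarrow> (\<lambda>x. c * exp (inner k x) * \<psi> x) \<in> expalg"
proof (induction rule: expalg.induct)
  case (ex d l)
  have "(\<lambda>x. c * exp (inner k x) * (d * exp (inner l x))) = (\<lambda>x. (c * d) * exp (inner (k + l) x))"
    by (simp add: fun_eq_iff inner_add_left exp_add algebra_simps)
  then show ?case by (simp add: expalg.ex)
next
  case (add \<phi> \<psi>)
  then show ?case using expalg.add[OF add.IH] by (simp add: distrib_left)
qed

lemma expalg_mult: "\<phi> \<in> expalg \<Longrightarrow> \<psi> \<in> expalg \<Longrightarrow> (\<lambda>x. \<phi> x * \<psi> x) \<in> expalg"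
proof (induction rule: expalg.induct)
  case (ex c k)
  then show ?case using expalg_mult_ex by blast
next
  case (add \<phi>1 \<phi>2)
  then show ?case using expalg.add[OF add.IH] by (simp add: distrib_right)
qed

lemma expalg_const: "(\<lambda>x. c) \<in> expalg"
  using expalg.ex[of c 0] by simp

lemma expalg_cont: "\<phi> \<in> expalg \<Longrightarrow> continuous_on S \<phi>"
proof (induction rule: expalg.induct)
  case (ex c k)
  show ?case by (intro continuous_on_mult continuous_on_const continuous_on_exp continuous_on_inner continuous_on_id)
next
  case (add \<phi> \<psi>)
  then show ?case by (intro continuous_on_add) auto
qed

lemma expalg_sep:
  fixes x y :: "'a::euclidean_space"
  assumes "x \<noteq> y" shows "\<exists>\<phi>\<in>expalg. \<phi> x \<noteq> \<phi> y"
proof -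
  have "inner (x - y) x \<noteq> inner (x - y) y"
  proof
    assume "inner (x - y) x = inner (x - y) y"
    then have "inner (x - y) (x - y) = 0" by (simp add: inner_diff_right)
    then show False using assms by simp
  qed
  then have "exp (inner (x - y) x) \<noteq> exp (inner (x - y) y)" by simp
  then show ?thesis using expalg.ex[of 1 "x - y"] by force
qed

lemma expalg_orth:
  fixes f :: "'a::euclidean_space \<Rightarrow> real"
  assumes om: "open \<Omega>" "bounded \<Omega>" "Linf_on \<Omega> f"
    and E: "\<And>k. integral\<^sup>L (lebesgue_on \<Omega>) (\<lambda>x. f x * exp (inner k x)) = 0"
  shows "\<phi> \<in> expalg \<Longrightarrow> integral\<^sup>L (lebesgue_on \<Omega>) (\<lambda>x. f x * \<phi> x) = 0"
proof (induction rule: expalg.induct)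
  case (ex c k)
  have "integral\<^sup>L (lebesgue_on \<Omega>) (\<lambda>x. f x * (c * exp (inner k x))) = c * integral\<^sup>L (lebesgue_on \<Omega>) (\<lambda>x. f x * exp (inner k x))"
    by (simp add: algebra_simps)
  then show ?case using E by simp
next
  case (add \<phi> \<psi>)
  have "integrable (lebesgue_on \<Omega>) (\<lambda>x. f x * \<phi> x)" "integrable (lebesgue_on \<Omega>) (\<lambda>x. f x * \<psi> x)"
    using int_fphi[OF om] expalg_cont add.hyps by blast+
  then show ?case using add.IH by (simp add: distrib_left)
qed

lemma small_zero:
  fixes a B :: real
  assumes B: "B \<ge> 0" and H: "\<And>e. e > 0 \<Longrightarrow> \<bar>a\<bar> \<le> e * B"
  shows "a = 0"
proof (rule ccontr)
  assume "a \<noteq> 0"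
  then have "\<bar>a\<bar> > 0" by simp
  define e where "e = \<bar>a\<bar> / (2 * (B + 1))"
  have e: "e > 0" unfolding e_def using \<open>\<bar>a\<bar> > 0\<close> B by simp
  have "e * B < \<bar>a\<bar>"
  proof -
    have "e * B \<le> e * (B + 1)" using e by simp
    also have "\<dots> = \<bar>a\<bar> / 2" unfolding e_def using B by (simp add: field_simps)
    finally show ?thesis using \<open>\<bar>a\<bar> > 0\<close> by simp
  qed
  then show False using H[OF e] by simp
qed

lemma cont_orth:
  fixes f :: "'a::euclidean_space \<Rightarrow> real"
  assumes om: "open \<Omega>" "bounded \<Omega>" "Linf_on \<Omega> f"
    and E: "\<And>k. integral\<^sup>L (lebesgue_on \<Omega>) (\<lambda>x. f x * exp (inner k x)) = 0"
    and \<phi>: "continuous_on UNIV \<phi>"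
  shows "integral\<^sup>L (lebesgue_on \<Omega>) (\<lambda>x. f x * \<phi> x) = 0"
proof -
  let ?M = "lebesgue_on \<Omega>"
  have fi: "integrable ?M f" using int_fphi[OF om, of "\<lambda>_. 1"] by simp
  define B where "B = integral\<^sup>L ?M (\<lambda>x. \<bar>f x\<bar>)"
  have B: "B \<ge> 0" unfolding B_def by simp
  show ?thesis
  proof (rule small_zero[OF B])
    fix e :: real assume e: "e > 0"
    have "compact (closure \<Omega>)" using om(2) compact_closure by auto
    have "\<exists>g. g \<in> expalg \<and> (\<forall>x\<in>closure \<Omega>. \<bar>\<phi> x - g x\<bar> < e)"
    proof (rule Stone_Weierstrass_HOL)
      show "compact (closure \<Omega>)" by fact
      show "(\<lambda>x. c) \<in> expalg" for c by (rule expalg_const)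
      show "continuous_on (closure \<Omega>) g" if "g \<in> expalg" for g using that by (rule expalg_cont)
      show "(\<lambda>x. g x + h x) \<in> expalg" if "g \<in> expalg \<and> h \<in> expalg" for g h
        using that by (blast intro: expalg.add)
      show "(\<lambda>x. g x * h x) \<in> expalg" if "g \<in> expalg \<and> h \<in> expalg" for g h
        using that expalg_mult by blast
      show "\<exists>g. g \<in> expalg \<and> g x \<noteq> g y" if "x \<in> closure \<Omega> \<and> y \<in> closure \<Omega> \<and> x \<noteq> y" for x y
        using that expalg_sep by blast
      show "continuous_on (closure \<Omega>) \<phi>" using continuous_on_subset[OF \<phi>] by blast
    qed (rule e)
    then obtain g where g: "g \<in> expalg" "\<forall>x\<in>closure \<Omega>. \<bar>\<phi> x - g x\<bar> < e" by blast
    have ig: "integrable ?M (\<lambda>x. f x * g x)" using int_fphi[OF om expalg_cont[OF g(1)]] .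
    have i\<phi>: "integrable ?M (\<lambda>x. f x * \<phi> x)" using int_fphi[OF om \<phi>] .
    have "integral\<^sup>L ?M (\<lambda>x. f x * \<phi> x) = integral\<^sup>L ?M (\<lambda>x. f x * \<phi> x - f x * g x)"
      using expalg_orth[OF om E g(1)] ig i\<phi> by simp
    also have "\<bar>\<dots>\<bar> \<le> integral\<^sup>L ?M (\<lambda>x. e * \<bar>f x\<bar>)"
    proof (rule integral_abs_bound_integral)
      show "integrable ?M (\<lambda>x. f x * \<phi> x - f x * g x)" using ig i\<phi> by simp
      show "integrable ?M (\<lambda>x. e * \<bar>f x\<bar>)" using fi by simp
      fix x assume "x \<in> space ?M"
      then have "x \<in> closure \<Omega>" using closure_subset by auto
      then have "\<bar>\<phi> x - g x\<bar> \<le> e" using g(2) by (simp add: less_imp_le)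
      then have "\<bar>f x\<bar> * \<bar>\<phi> x - g x\<bar> \<le> \<bar>f x\<bar> * e" by (simp add: mult_left_mono)
      moreover have "\<bar>f x * \<phi> x - f x * g x\<bar> = \<bar>f x\<bar> * \<bar>\<phi> x - g x\<bar>"
        by (simp add: right_diff_distrib[symmetric] abs_mult)
      ultimately show "\<bar>f x * \<phi> x - f x * g x\<bar> \<le> e * \<bar>f x\<bar>" by (simp add: mult.commute)
    qed
    also have "\<dots> = e * B" unfolding B_def by simp
    finally show "\<bar>integral\<^sup>L ?M (\<lambda>x. f x * \<phi> x)\<bar> \<le> e * B" .
  qed
qed

lemma open_lebesgue: "open T \<Longrightarrow> T \<in> sets lebesgue"
  using borel_open[of T] sets_completionI_sets[of T lborel] by simp

lemma Linf_bound:
  assumes "Linf_on \<Omega> g"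
  obtains C where "C \<ge> 0" "AE x in lebesgue_on \<Omega>. \<bar>g x\<bar> \<le> C" "g \<in> borel_measurable (lebesgue_on \<Omega>)"
proof -
  obtain C where C: "AE x in lebesgue_on \<Omega>. \<bar>g x\<bar> \<le> C" and gm: "g \<in> borel_measurable (lebesgue_on \<Omega>)"
    using assms unfolding Linf_on_def by auto
  have "AE x in lebesgue_on \<Omega>. \<bar>g x\<bar> \<le> max C 0" using C by eventually_elim auto
  then show ?thesis using that[of "max C 0"] gm by auto
qed

lemma open_orth:
  fixes f :: "'a::euclidean_space \<Rightarrow> real"
  assumes om: "open \<Omega>" "bounded \<Omega>" "Linf_on \<Omega> f"
    and E: "\<And>k. integral\<^sup>L (lebesgue_on \<Omega>) (\<lambda>x. f x * exp (inner k x)) = 0"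
    and T: "open T"
  shows "integral\<^sup>L (lebesgue_on \<Omega>) (\<lambda>x. f x * indicator T x) = 0"
proof (cases "T = UNIV")
  case True
  then show ?thesis using cont_orth[OF om E, of "\<lambda>_. 1"] by simp
next
  case False
  let ?M = "lebesgue_on \<Omega>"
  have Ol: "\<Omega> \<in> sets lebesgue" using open_lebesgue[OF om(1)] .
  have ne: "- T \<noteq> {}" using False by auto
  have cl: "closed (- T)" using T by auto
  define \<phi> where "\<phi> i x = min 1 (real i * infdist x (- T))" for i x
  have \<phi>c: "continuous_on UNIV (\<phi> i)" for i
    unfolding \<phi>_def by (intro continuous_on_min continuous_on_const continuous_on_mult continuous_on_infdist continuous_on_id)
  have fi: "integrable ?M f" using int_fphi[OF om, of "\<lambda>_. 1"] by simp
  have lim: "(\<lambda>i. integral\<^sup>L ?M (\<lambda>x. f x * \<phi> i x)) \<longlonglongrightarrow> integral\<^sup>L ?M (\<lambda>x. f x * indicator T x)"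
  proof (rule integral_dominated_convergence[where w="\<lambda>x. \<bar>f x\<bar>"])
    have im: "indicator T \<in> borel_measurable ?M"
      by (rule measurable_restrict_space1) (rule borel_measurable_indicator[OF open_lebesgue[OF T]])
    show "(\<lambda>x. f x * indicator T x) \<in> borel_measurable ?M"
      using borel_measurable_integrable[OF fi] im by measurable
    show "(\<lambda>x. f x * \<phi> i x) \<in> borel_measurable ?M" for i
      using int_fphi[OF om \<phi>c] by (rule borel_measurable_integrable)
    show "integrable ?M (\<lambda>x. \<bar>f x\<bar>)" using fi by simp
    show "AE x in ?M. norm (f x * \<phi> i x) \<le> \<bar>f x\<bar>" for i
    proof (rule AE_I2)
      fix x
      have "0 \<le> \<phi> i x" "\<phi> i x \<le> 1" unfolding \<phi>_def by (auto simp: infdist_nonneg)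
      then show "norm (f x * \<phi> i x) \<le> \<bar>f x\<bar>" by (simp add: abs_mult mult_left_le)
    qed
    show "AE x in ?M. (\<lambda>i. f x * \<phi> i x) \<longlonglongrightarrow> f x * indicator T x"
    proof (rule AE_I2)
      fix x
      show "(\<lambda>i. f x * \<phi> i x) \<longlonglongrightarrow> f x * indicator T x"
      proof (cases "x \<in> T")
        case True
        then have d: "infdist x (- T) > 0" using infdist_pos_not_in_closed[OF cl ne] by auto
        then obtain N where N: "1 < real N * infdist x (- T)" using reals_Archimedean3 by blast
        have "\<forall>\<^sub>F i in sequentially. f x * \<phi> i x = f x * indicator T x"
        proof (rule eventually_sequentiallyI[of N])
          fix i assume "N \<le> i"
          then have "real N * infdist x (- T) \<le> real i * infdist x (- T)"
            using d by (intro mult_right_mono) auto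
          then show "f x * \<phi> i x = f x * indicator T x" using N True unfolding \<phi>_def by auto
        qed
        then show ?thesis by (rule tendsto_eventually)
      next
        case False
        then show ?thesis unfolding \<phi>_def by simp
      qed
    qed
  qed
  moreover have "integral\<^sup>L ?M (\<lambda>x. f x * \<phi> i x) = 0" for i
    by (rule cont_orth[OF om E \<phi>c])
  ultimately have "(\<lambda>i. 0) \<longlonglongrightarrow> integral\<^sup>L ?M (\<lambda>x. f x * indicator T x)" by simp
  then show ?thesis by (rule LIMSEQ_unique[OF tendsto_const, symmetric])
qed

lemma ae_nonpos:
  fixes g :: "'a::euclidean_space \<Rightarrow> real"
  assumes om: "open \<Omega>" "bounded \<Omega>" "Linf_on \<Omega> g"
    and T: "\<And>T. open T \<Longrightarrow> integral\<^sup>L (lebesgue_on \<Omega>) (\<lambda>x. g x * indicator T x) = 0"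
  shows "AE x in lebesgue_on \<Omega>. g x \<le> 0"
proof -
  let ?M = "lebesgue_on \<Omega>"
  have Ol: "\<Omega> \<in> sets lebesgue" using open_lebesgue[OF om(1)] .
  have Olm: "\<Omega> \<in> lmeasurable" using om by (intro lmeasurable_open) auto
  interpret finite_measure ?M by (rule finite_measure_lebesgue_on[OF Olm])
  obtain C where C0: "C \<ge> 0" and C: "AE x in ?M. \<bar>g x\<bar> \<le> C" and gm: "g \<in> borel_measurable ?M"
    using Linf_bound[OF om(3)] by blast
  have sp: "space ?M = \<Omega>" by simp
  have ii: "integrable ?M (\<lambda>x. g x * indicator A x)" if A: "A \<in> sets lebesgue" for A
  proof (rule integrable_const_bound[where B=C])
    show "AE x in ?M. norm (g x * indicator A x) \<le> C"
      using C by eventually_elim (auto simp: indicator_def C0)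
    have im: "indicator A \<in> borel_measurable ?M"
      by (rule measurable_restrict_space1) (rule borel_measurable_indicator[OF A])
    show "(\<lambda>x. g x * indicator A x) \<in> borel_measurable ?M"
      using gm im by measurable
  qed
  define E where "E = {x \<in> \<Omega>. g x > 0}"
  have EM: "E \<in> sets ?M"
  proof -
    have "{x \<in> space ?M. g x > 0} \<in> sets ?M" using gm by measurable
    then show ?thesis unfolding E_def by simp
  qed
  have EL: "E \<in> sets lebesgue" using EM Ol by (simp add: sets_restrict_space_iff)
  define J where "J = integral\<^sup>L ?M (\<lambda>x. g x * indicator E x)"
  have J0: "J \<ge> 0" unfolding J_def by (intro integral_nonneg_AE AE_I2) (auto simp: indicator_def E_def)
  have Jle: "J \<le> e * C" if e: "e > 0" for e
  proof -
    obtain U where U: "open U" "E \<subseteq> U" "(U - E) \<in> lmeasurable" "emeasure lebesgue (U - E) < ennreal e"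
      using sets_lebesgue_outer_open[OF EL e] by blast
    have UL: "U - E \<in> sets lebesgue" using U(3) by auto
    have "0 = integral\<^sup>L ?M (\<lambda>x. g x * indicator U x)" using T[OF U(1)] by simp
    also have "\<dots> = integral\<^sup>L ?M (\<lambda>x. g x * indicator E x + g x * indicator (U - E) x)"
      using U(2) by (intro Bochner_Integration.integral_cong) (auto simp: indicator_def)
    also have "\<dots> = J + integral\<^sup>L ?M (\<lambda>x. g x * indicator (U - E) x)"
      unfolding J_def using ii[OF EL] ii[OF UL] by simp
    finally have J: "J = - integral\<^sup>L ?M (\<lambda>x. g x * indicator (U - E) x)" by simp
    have "\<bar>integral\<^sup>L ?M (\<lambda>x. g x * indicator (U - E) x)\<bar> \<le> integral\<^sup>L ?M (\<lambda>x. \<bar>g x * indicator (U - E) x\<bar>)"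
      by (rule integral_abs_bound)
    also have "\<dots> \<le> integral\<^sup>L ?M (\<lambda>x. C * indicator (U - E) x)"
    proof (rule integral_mono_AE)
      show "integrable ?M (\<lambda>x. \<bar>g x * indicator (U - E) x\<bar>)" using ii[OF UL] by simp
      have im: "indicator (U - E) \<in> borel_measurable ?M"
        by (rule measurable_restrict_space1) (rule borel_measurable_indicator[OF UL])
      show "integrable ?M (\<lambda>x. C * indicator (U - E) x)"
      proof (rule integrable_const_bound[where B=C])
        show "AE x in ?M. norm (C * indicator (U - E) x) \<le> C" using C0 by (auto simp: indicator_def)
        show "(\<lambda>x. C * indicator (U - E) x) \<in> borel_measurable ?M" using im by measurable
      qed
      show "AE x in ?M. \<bar>g x * indicator (U - E) x\<bar> \<le> C * indicator (U - E) x"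
        using C by eventually_elim (auto simp: indicator_def)
    qed
    also have "\<dots> = C * measure ?M ((U - E) \<inter> \<Omega>)" by simp
    finally have b1: "\<bar>integral\<^sup>L ?M (\<lambda>x. g x * indicator (U - E) x)\<bar> \<le> C * measure ?M ((U - E) \<inter> \<Omega>)" .
    have "measure ?M ((U - E) \<inter> \<Omega>) = measure lebesgue ((U - E) \<inter> \<Omega>)"
      using Ol by (intro measure_restrict_space) auto
    also have "\<dots> \<le> measure lebesgue (U - E)"
      using U(3) UL Ol by (intro measure_mono_fmeasurable) auto
    also have "measure lebesgue (U - E) < e"
    proof -
      have "emeasure lebesgue (U - E) = ennreal (measure lebesgue (U - E))"
        using U(3) by (simp add: emeasure_eq_measure2)
      then show ?thesis using U(4) e by (simp add: ennreal_less_iff)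
    qed
    finally have "measure ?M ((U - E) \<inter> \<Omega>) \<le> e" by simp
    then have "C * measure ?M ((U - E) \<inter> \<Omega>) \<le> C * e" using C0 by (rule mult_left_mono)
    then have "\<bar>integral\<^sup>L ?M (\<lambda>x. g x * indicator (U - E) x)\<bar> \<le> C * e" using b1 by linarith
    then show ?thesis using J by (simp add: mult.commute)
  qed
  have "J = 0"
  proof (rule small_zero[OF C0])
    fix e :: real assume "e > 0" then show "\<bar>J\<bar> \<le> e * C" using Jle J0 by simp
  qed
  then have "AE x in ?M. g x * indicator E x = 0"
    unfolding J_def using ii[OF EL]
    by (subst integral_nonneg_eq_0_iff_AE[symmetric]) (auto simp: indicator_def E_def)
  then show ?thesis
  proof (rule AE_mp[OF _ AE_I2], intro impI)
    fix x assume "x \<in> space ?M" "g x * indicator E x = 0"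
    then show "g x \<le> 0" by (auto simp: E_def indicator_def split: if_splits)
  qed
qed

theorem propositionA1:
  fixes \<Omega> :: "'a::euclidean_space set" and \<omega> :: 'a and m :: nat and f :: "'a \<Rightarrow> real"
  assumes "DIM('a) \<ge> 2"
    and "open \<Omega>" and "bounded \<Omega>" and "smooth_boundary \<Omega>"
    and "norm \<omega> = 1"
    and "m \<ge> 2"
    and "Linf_on \<Omega> f"
    and "\<forall>v1 v2. smooth_on UNIV v1 \<and> smooth_on UNIV v2 \<and> harmonic_on \<Omega> v1 \<and> harmonic_on \<Omega> v2 \<longrightarrow>
           integral\<^sup>L (lebesgue_on \<Omega>)
             (\<lambda>x. f x * (frechet_derivative v1 (at x) \<omega>) ^ (m - 1) * grad_dot v1 v2 x) = 0"
  shows "AE x in lebesgue_on \<Omega>. f x = 0"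
proof -
  note om = assms(2,3,7)
  have E: "integral\<^sup>L (lebesgue_on \<Omega>) (\<lambda>x. f x * exp (inner k x)) = 0" for k
    by (rule exp_orth[OF assms(1) om assms(5,6,8)])
  have T: "integral\<^sup>L (lebesgue_on \<Omega>) (\<lambda>x. f x * indicator T x) = 0" if "open T" for T
    by (rule open_orth[OF om E that])
  have Lm: "Linf_on \<Omega> (\<lambda>x. - f x)"
    using assms(7) unfolding Linf_on_def by (auto simp: borel_measurable_uminus_eq)
  have T': "integral\<^sup>L (lebesgue_on \<Omega>) (\<lambda>x. - f x * indicator T x) = 0" if "open T" for T
    using T[OF that] by simp
  have a1: "AE x in lebesgue_on \<Omega>. f x \<le> 0" by (rule ae_nonpos[OF om T])
  have a2: "AE x in lebesgue_on \<Omega>. - f x \<le> 0" by (rule ae_nonpos[OF assms(2,3) Lm T'])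
  from a1 a2 show ?thesis by eventually_elim simp
qed

end
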